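(* Let $k\ge1$ and let $w=a_1a_2\cdots a_k$ be an admissible $k$-word, and let $h=h(w)$. Then $h$ is the least non-negative integer $i$ with $T_k^{i}[w]\in\psi_k(V_1)$, and moreover $T_k^{h}[w]=\psi_k([a_{h+1}])$.
   Context: Let $\mathcal{A}$ be a finite alphabet of $r$ symbols and $T=(T_{x,y})$ an $r\times r$ matrix with entries in $\{0,1\}$ which is irreducible, i.e. the directed graph on $\mathcal{A}$ with an edge $x\to y$ iff $T_{y,x}=1$ is strongly connected. An admissible $k$-word is a string $a_1\cdots a_k$ of symbols with $T_{a_{i+1},a_i}=1$ for $1\le i\le k-1$. $V_k$ is the complex vector space with basis $\{[w]\}$ indexed by admissible $k$-words. $\psi_k:V_1\to V_k$ is linear with $\psi_k([a])$ the sum of $[w]$ over all admissible $k$-words beginning with $a$. $T_k:V_k\to V_k$ is linear with $T_k([a_1\cdots a_k])=\sum[a_2\cdots a_kx]$, summed over symbols $x$ with $a_2\cdots a_kx$ admissible. For an admissible $k$-word $u=u_1\cdots u_k$, $h(u)$ is the smallest non-negative integer $h$ such that $u$ is the only admissible $k$-word beginning with $u_1\cdots u_{h+1}$ (so $h(u)\le k-1$). *)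

theory Defs
  imports Main "HOL.Complex"
begin

(* Symbols are the elements of a finite type 'a (so r = CARD('a)).
   T is the r x r 0/1 matrix, T x y = entry T_{x,y}. *)

definition zero_one_matrix :: "('a \<Rightarrow> 'a \<Rightarrow> nat) \<Rightarrow> bool" where
  "zero_one_matrix T \<longleftrightarrow> (\<forall>x y. T x y = 0 \<or> T x y = 1)"

definition irreducible_mat :: "('a \<Rightarrow> 'a \<Rightarrow> nat) \<Rightarrow> bool" where
  "irreducible_mat T \<longleftrightarrow> (\<forall>x y. (\<lambda>a b. T b a = 1)\<^sup>*\<^sup>* x y)"

(* admissible k-word a_1 ... a_k (list index i corresponds to a_{i+1}) *)
definition admissible :: "('a \<Rightarrow> 'a \<Rightarrow> nat) \<Rightarrow> nat \<Rightarrow> 'a list \<Rightarrow> bool" where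
  "admissible T k w \<longleftrightarrow> length w = k \<and> (\<forall>i. i + 1 < k \<longrightarrow> T (w ! (i+1)) (w ! i) = 1)"

(* Elements of V_k are represented by their coordinate functions on words
   (supported on admissible k-words); basis vector [w]: *)
definition basis_vec :: "'a list \<Rightarrow> ('a list \<Rightarrow> complex)" where
  "basis_vec w = (\<lambda>u. if u = w then 1 else 0)"

(* psi_k([a]) = sum of [w] over admissible k-words beginning with a *)
definition psi :: "('a \<Rightarrow> 'a \<Rightarrow> nat) \<Rightarrow> nat \<Rightarrow> 'a \<Rightarrow> ('a list \<Rightarrow> complex)" where
  "psi T k a = (\<lambda>u. if admissible T k u \<and> u \<noteq> [] \<and> hd u = a then 1 else 0)"

(* psi_k(V_1): image of V_1 (spanned by all [a]) under the linear map psi_k *)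
definition psi_image :: "('a::finite \<Rightarrow> 'a \<Rightarrow> nat) \<Rightarrow> nat \<Rightarrow> ('a list \<Rightarrow> complex) set" where
  "psi_image T k = {v. \<exists>c :: 'a \<Rightarrow> complex. v = (\<lambda>u. \<Sum>a\<in>UNIV. c a * psi T k a u)}"

(* T_k([a_1...a_k]) = sum of [a_2...a_k x] over x with a_2...a_k x admissible,
   extended linearly: the coefficient of an admissible u in T_k v is the sum of
   v w over admissible w with tl w = butlast u. *)
definition Tk :: "('a \<Rightarrow> 'a \<Rightarrow> nat) \<Rightarrow> nat \<Rightarrow> ('a list \<Rightarrow> complex) \<Rightarrow> ('a list \<Rightarrow> complex)" where
  "Tk T k v = (\<lambda>u. if admissible T k u
                    then (\<Sum>w\<in>{w. admissible T k w \<and> tl w = butlast u}. v w) else 0)"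

definition hh :: "('a \<Rightarrow> 'a \<Rightarrow> nat) \<Rightarrow> nat \<Rightarrow> 'a list \<Rightarrow> nat" where
  "hh T k u = (LEAST h. \<forall>v. admissible T k v \<and> take (h+1) v = take (h+1) u \<longrightarrow> v = u)"

end

theory Submission
  imports Defs
begin

lemma adm_succ:
  "admissible T k w \<longleftrightarrow> length w = k \<and> successively (\<lambda>x y. T y x = 1) w"
  unfolding admissible_def successively_conv_nth by auto

lemma succ_take: "successively P w \<Longrightarrow> successively P (take n w)"
  by (metis append_take_drop_id successively_append_iff)

lemma succ_drop: "successively P w \<Longrightarrow> successively P (drop n w)"
  by (metis append_take_drop_id successively_append_iff)

lemma succ_exists:
  assumes "irreducible_mat T" "k \<ge> 2" "admissible T k w"
  shows "\<exists>y. T y x = 1"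
proof -
  have w1: "T (w!1) (w!0) = 1" using assms(2,3) unfolding admissible_def
    by (metis One_nat_def Suc_1 add_0 le_imp_less_Suc less_eq_Suc_le)
  have "(\<lambda>a b. T b a = 1)\<^sup>*\<^sup>* x (w!0)" using assms(1) unfolding irreducible_mat_def by blast
  then show ?thesis
  proof (cases rule: converse_rtranclpE)
    case base then show ?thesis using w1 by blast
  next
    case (step y) then show ?thesis by blast
  qed
qed

lemma extend:
  assumes "\<And>x. \<exists>y. T y x = 1" "s \<noteq> []" "successively (\<lambda>x y. T y x = 1) s"
  shows "\<exists>e. length e = n \<and> successively (\<lambda>x y. T y x = 1) (s @ e)"
proof (induction n)
  case 0 then show ?case using assms by auto
next
  case (Suc n)
  then obtain e where e: "length e = n" "successively (\<lambda>x y. T y x = 1) (s @ e)" by blast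
  obtain y where y: "T y (last (s @ e)) = 1" using assms(1) by blast
  have "successively (\<lambda>x y. T y x = 1) ((s @ e) @ [y])"
    using e y assms(2) by (subst successively_append_iff) auto
  then show ?case using e by (intro exI[of _ "e @ [y]"]) auto
qed

lemma psi_sum:
  fixes c :: "'a::finite \<Rightarrow> complex"
  shows "(\<Sum>a\<in>UNIV. c a * psi T k a u) = (if admissible T k u \<and> u \<noteq> [] then c (hd u) else 0)"
proof -
  have "(\<Sum>a\<in>UNIV. c a * psi T k a u) = (\<Sum>a\<in>UNIV. if a = hd u then (if admissible T k u \<and> u \<noteq> [] then c a else 0) else 0)"
    by (rule sum.cong) (auto simp: psi_def)
  also have "\<dots> = (if admissible T k u \<and> u \<noteq> [] then c (hd u) else 0)"
    by (simp add: sum.delta)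
  finally show ?thesis .
qed

lemma formula:
  fixes T :: "'a::finite \<Rightarrow> 'a \<Rightarrow> nat"
  assumes "i < k" "admissible T k w"
  shows "((Tk T k) ^^ i) (basis_vec w) = (\<lambda>u. if admissible T k u \<and> take (k-i) u = drop i w then 1 else 0)"
  using assms(1)
proof (induction i)
  case 0
  show ?case using assms(2) by (auto simp: basis_vec_def admissible_def)
next
  case (Suc i)
  have IH: "((Tk T k) ^^ i) (basis_vec w) = (\<lambda>u. if admissible T k u \<and> take (k-i) u = drop i w then 1 else 0)"
    using Suc by auto
  have lw: "length w = k" using assms(2) by (simp add: admissible_def)
  show ?case
  proof
    fix u
    show "((Tk T k) ^^ Suc i) (basis_vec w) u = (if admissible T k u \<and> take (k - Suc i) u = drop (Suc i) w then 1 else 0)"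
    proof (cases "admissible T k u")
      case False then show ?thesis by (simp add: Tk_def)
    next
      case True
      have lu: "length u = k" using True by (simp add: admissible_def)
      define A where "A = {v. admissible T k v \<and> tl v = butlast u}"
      define v0 where "v0 = w!i # butlast u"
      have finA: "finite A"
      proof -
        have "A \<subseteq> {xs. set xs \<subseteq> UNIV \<and> length xs = k}" by (auto simp: A_def admissible_def)
        then show ?thesis using finite_lists_length_eq[of "UNIV :: 'a set" k] finite_subset by auto
      qed
      have key: "\<forall>v\<in>A. (admissible T k v \<and> take (k-i) v = drop i w) \<longleftrightarrow> (v = v0 \<and> take (k - Suc i) u = drop (Suc i) w)"
      proof
        fix v assume vA: "v \<in> A"
        then have av: "admissible T k v" and tv: "tl v = butlast u" by (auto simp: A_def)
        have lv: "length v = k" using av by (simp add: admissible_def)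
        then obtain c r where v: "v = c # r" using Suc.prems by (cases v) auto
        have r: "r = butlast u" using tv v by simp
        have t1: "take (k - Suc i) (butlast u) = take (k - Suc i) u"
          using take_butlast[of "k - Suc i" u] lu Suc.prems by auto
        have dw: "drop i w = w!i # drop (Suc i) w"
          using lw Suc.prems by (simp add: Cons_nth_drop_Suc)
        have kk: "k - i = Suc (k - Suc i)" using Suc.prems by simp
        have "take (k-i) v = drop i w \<longleftrightarrow> c = w!i \<and> take (k - Suc i) u = drop (Suc i) w"
          using v r t1 dw kk by simp
        then show "(admissible T k v \<and> take (k-i) v = drop i w) \<longleftrightarrow> (v = v0 \<and> take (k - Suc i) u = drop (Suc i) w)"
          using av v r v0_def by auto
      qed
      have v0A: "take (k - Suc i) u = drop (Suc i) w \<Longrightarrow> v0 \<in> A"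
      proof -
        assume tk: "take (k - Suc i) u = drop (Suc i) w"
        have su: "successively (\<lambda>x y. T y x = 1) u" using True adm_succ by blast
        have sb: "successively (\<lambda>x y. T y x = 1) (butlast u)"
          using su by (simp add: butlast_conv_take succ_take)
        have hu: "hd (butlast u) = w ! Suc i"
        proof -
          have "hd (take (k - Suc i) u) = hd u" using Suc.prems lu
            by (metis hd_take zero_less_diff)
          moreover have "hd (drop (Suc i) w) = w ! Suc i" using Suc.prems lw hd_drop_conv_nth by auto
          moreover have "hd (butlast u) = hd u" 
          proof -
            have "length u \<ge> 2" using lu Suc.prems by simp
            then show ?thesis by (cases u; cases "tl u") auto
          qed
          ultimately show ?thesis using tk by simp
        qed
        have bu: "butlast u \<noteq> []" using lu Suc.prems by (cases u rule: rev_cases) auto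
        have ww: "T (w ! Suc i) (w ! i) = 1" using assms(2) Suc.prems unfolding admissible_def
          by (metis Suc_eq_plus1)
        have "successively (\<lambda>x y. T y x = 1) v0"
          unfolding v0_def using sb hu bu ww by (simp add: successively_Cons)
        moreover have "length v0 = k" using v0_def lu Suc.prems by auto
        ultimately have "admissible T k v0" using adm_succ by blast
        then show "v0 \<in> A" unfolding A_def v0_def by simp
      qed
      have "((Tk T k) ^^ Suc i) (basis_vec w) u = (\<Sum>v\<in>A. if admissible T k v \<and> take (k-i) v = drop i w then 1 else 0)"
        using True by (simp add: IH Tk_def A_def)
      also have "\<dots> = (\<Sum>v\<in>A. if v = v0 then (if take (k - Suc i) u = drop (Suc i) w then 1 else 0) else 0)"
        by (rule sum.cong) (use key in auto)
      also have "\<dots> = (if take (k - Suc i) u = drop (Suc i) w then 1 else 0)"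
        using finA v0A by (cases "take (k - Suc i) u = drop (Suc i) w") (auto simp: sum.delta)
      finally show ?thesis using True by simp
    qed
  qed
qed

theorem lemma1p5:
  fixes T :: "'a::finite \<Rightarrow> 'a \<Rightarrow> nat" and k :: nat and w :: "'a list"
  assumes "zero_one_matrix T" and "irreducible_mat T"
    and "k \<ge> 1" and "admissible T k w"
  shows "((Tk T k) ^^ hh T k w) (basis_vec w) \<in> psi_image T k
       \<and> (\<forall>i < hh T k w. ((Tk T k) ^^ i) (basis_vec w) \<notin> psi_image T k)
       \<and> ((Tk T k) ^^ hh T k w) (basis_vec w) = psi T k (w ! hh T k w)"
proof -
  define h where "h = hh T k w"
  define Q where "Q = (\<lambda>h. \<forall>v. admissible T k v \<and> take (h+1) v = take (h+1) w \<longrightarrow> v = w)"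
  have lw: "length w = k" using assms(4) by (simp add: admissible_def)
  have sw: "successively (\<lambda>x y. T y x = 1) w" using assms(4) adm_succ by blast
  have Qk: "Q (k-1)" unfolding Q_def using assms(3) lw by (auto simp: admissible_def)
  have hdef: "h = (LEAST h. Q h)" unfolding h_def hh_def Q_def by simp
  have Qh: "Q h" using Qk hdef by (metis LeastI)
  have hk: "h \<le> k - 1" using Qk hdef by (metis Least_le)
  have nQ: "\<And>i. i < h \<Longrightarrow> \<not> Q i" using hdef not_less_Least by blast
  have hlt: "h < k" using hk assms(3) by simp
  have P3: "((Tk T k) ^^ h) (basis_vec w) = psi T k (w ! h)"
  proof
    fix u
    show "((Tk T k) ^^ h) (basis_vec w) u = psi T k (w ! h) u"
    proof (cases "admissible T k u")
      case False then show ?thesis using formula[OF hlt assms(4)] by (simp add: psi_def)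
    next
      case True
      have lu: "length u = k" using True by (simp add: admissible_def)
      have un: "u \<noteq> []" using lu assms(3) by auto
      have hdw: "hd (drop h w) = w ! h" using hlt lw hd_drop_conv_nth by auto
      have "take (k-h) u = drop h w \<longleftrightarrow> hd u = w ! h"
      proof
        assume "take (k-h) u = drop h w"
        then show "hd u = w ! h" using hdw hlt
          by (metis hd_take zero_less_diff)
      next
        assume hu: "hd u = w ! h"
        define v where "v = take h w @ take (k-h) u"
        have lv: "length v = k" using v_def lw lu hlt by simp
        have su: "successively (\<lambda>x y. T y x = 1) u" using True adm_succ by blast
        have link: "h = 0 \<or> T (hd (take (k-h) u)) (last (take h w)) = 1"
        proof (cases h)
          case 0 then show ?thesis by simp
        next
          case (Suc j)
          have "last (take h w) = w ! j" using Suc hlt lw by (simp add: take_Suc_conv_app_nth)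
          moreover have "hd (take (k-h) u) = w ! h" using hu hlt by (metis hd_take zero_less_diff)
          moreover have "T (w ! h) (w ! j) = 1" using assms(4) Suc hlt unfolding admissible_def
            by (metis Suc_eq_plus1)
          ultimately show ?thesis by simp
        qed
        have "successively (\<lambda>x y. T y x = 1) v"
          unfolding v_def using succ_take[OF sw] succ_take[OF su] link
          by (subst successively_append_iff) auto
        then have av: "admissible T k v" using lv adm_succ by blast
        have "take (h+1) v = take h w @ take 1 (take (k-h) u)" using v_def lw hlt by simp
        also have "take 1 (take (k-h) u) = [hd u]" using un hlt
          by (cases u) auto
        also have "take h w @ [hd u] = take (h+1) w" using hu hlt lw
          by (simp add: take_Suc_conv_app_nth)
        finally have "v = w" using Qh av unfolding Q_def by blast
        then show "take (k-h) u = drop h w" using v_def lw hlt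
          by (metis append_eq_conv_conj length_take min.absorb4)
      qed
      then show ?thesis using formula[OF hlt assms(4)] True un by (simp add: psi_def)
    qed
  qed
  have P1: "psi T k (w ! h) \<in> psi_image T k"
    unfolding psi_image_def
    by (rule CollectI, rule exI[of _ "\<lambda>a. if a = w ! h then 1 else 0"]) (rule ext, subst psi_sum, simp add: psi_def)
  have P2: "((Tk T k) ^^ i) (basis_vec w) \<notin> psi_image T k" if ih: "i < h" for i
  proof
    assume "((Tk T k) ^^ i) (basis_vec w) \<in> psi_image T k"
    then obtain c where c: "((Tk T k) ^^ i) (basis_vec w) = (\<lambda>u. \<Sum>a\<in>UNIV. c a * psi T k a u)"
      unfolding psi_image_def by blast
    have ik: "i < k" using ih hlt by simp
    have F: "\<And>u. (if admissible T k u \<and> take (k-i) u = drop i w then 1 else 0)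
             = (if admissible T k u \<and> u \<noteq> [] then c (hd u) else (0::complex))"
    proof -
      fix u
      have "((Tk T k) ^^ i) (basis_vec w) u = (\<Sum>a\<in>UNIV. c a * psi T k a u)" using c by simp
      then show "?thesis u" unfolding formula[OF ik assms(4)] psi_sum .
    qed
    obtain v where av: "admissible T k v" and tv: "take (i+1) v = take (i+1) w" and vw: "v \<noteq> w"
      using nQ[OF ih] unfolding Q_def by blast
    have k2: "k \<ge> 2" using ih hk by simp
    have succ: "\<And>x. \<exists>y. T y x = 1" using succ_exists[OF assms(2) k2 assms(4)] by blast
    have lv: "length v = k" using av by (simp add: admissible_def)
    have sv: "successively (\<lambda>x y. T y x = 1) v" using av adm_succ by blast
    have dwn: "drop i w \<noteq> []" using ik lw by simp
    have dvn: "drop i v \<noteq> []" using ik lv by simp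
    obtain e1 where e1: "length e1 = i" "successively (\<lambda>x y. T y x = 1) (drop i w @ e1)"
      using extend[OF succ dwn succ_drop[OF sw]] by blast
    obtain e2 where e2: "length e2 = i" "successively (\<lambda>x y. T y x = 1) (drop i v @ e2)"
      using extend[OF succ dvn succ_drop[OF sv]] by blast
    have a1: "admissible T k (drop i w @ e1)" unfolding adm_succ using e1 lw ik by auto
    have a2: "admissible T k (drop i v @ e2)" unfolding adm_succ using e2 lv ik by auto
    have t1: "take (k-i) (drop i w @ e1) = drop i w" using lw by simp
    have h1: "hd (drop i w @ e1) = w ! i" using dwn lw ik by (simp add: hd_drop_conv_nth)
    have ci: "c (w ! i) = 1" using F[of "drop i w @ e1"] a1 t1 h1 dwn by simp
    have "v ! i = w ! i" using tv by (metis less_add_one nth_take)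
    then have h2: "hd (drop i v @ e2) = w ! i" using dvn lv ik by (simp add: hd_drop_conv_nth)
    have "take (k-i) (drop i v @ e2) = drop i w"
    proof (rule ccontr)
      assume "take (k-i) (drop i v @ e2) \<noteq> drop i w"
      then show False using F[of "drop i v @ e2"] a2 h2 dvn ci by simp
    qed
    then have dd: "drop i v = drop i w" using lv by simp
    have "take i v = take i w" using tv by (metis le_add1 min.absorb1 take_take)
    then have "v = w" using dd by (metis append_take_drop_id)
    then show False using vw by simp
  qed
  show ?thesis using P1 P2 P3 unfolding h_def by simp
qed

end
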